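(* The ML estimate of $\alpha_{t}$ from the observation $z_k = z_{k,\Re} + \jmath z_{k,\Im}$ (with $z_{k,\Re}, z_{k,\Im} \in \mathbb{R}$) is \begin{equation} \hat{\alpha}_{t,k}^{\text{ML}} = \arg\max_{\alpha \geq \rho_k \beta_k \tau_p} \; f_1 \left( z_{k,\Re} | \alpha \right) f_2 \left( z_{k,\Im} | \alpha \right) \end{equation} for the conditional PDFs \begin{align} &f_1 \left( z_{k,\Re} | \alpha \right) = \frac{ e^{- \frac{(z_{k,\Re})^2}{\lambda_2} \left( 1 - \frac{\lambda_1}{\lambda_1 + \lambda_2} \right)} }{\Gamma(M) \lambda_1^M \sqrt{\pi \lambda_2 }} \sum_{n=0}^{2M-1} {2M-1 \choose n} \notag \\ & \times \frac{\left( \Gamma \left( \frac{n+1}{2} \right) + c_n(z_{k,\Re}) \gamma \left( \frac{n+1}{2} , \frac{(z_{k,\Re})^2}{\lambda_2} \frac{\lambda_1}{\lambda_1+\lambda_2} \right) \right) }{ \left( \frac{z_{k,\Re}}{\lambda_2} \right)^{n+1-2M} \left( \frac{1}{\lambda_1} + \frac{1}{\lambda_2} \right)^{2M-\frac{n+1}{2}} }, \\ &f_2 \left( z_{k,\Im} | \alpha \right) = \frac{1}{\sqrt{\pi \lambda_2 }} e^{- \frac{( z_{k,\Im} )^2 }{\lambda_2} }, \end{align} where $\gamma(\cdot,\cdot)$ is the lower incomplete gamma function, $c_n(z)=(-1)^n$ if $z\ge 0$ and $c_n(z)=-1$ if $z<0$, and \begin{align} \lambda_1 &= \frac{\rho_k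 q \beta_k^2 \tau_p^2}{\alpha + \sigma^2}, \qquad \lambda_2 = \sigma^2 + \Upsilon_k + q \beta_k \tau_p - \lambda_1. \end{align}
   Context: A BS with $M$ antennas; $\tau_p$ orthogonal uplink pilots $\boldsymbol{\psi}_t$ with $\|\boldsymbol{\psi}_t\|^2=\tau_p$; $\mathcal{S}_t$ is the set of UEs sending pilot $t$, UE $i$ using power $\rho_i>0$. Uncorrelated Rayleigh fading $\mathbf{h}_k\sim\mathcal{CN}(\mathbf{0},\beta_k\mathbf{I}_M)$, independent across UEs, with $\beta_k$ known to UE $k$. The BS obtains $\mathbf{y}_t=\sum_{i\in\mathcal{S}_t}\sqrt{\rho_i\tau_p}\,\mathbf{h}_i+(\text{inter-cell interference of per-antenna power }\omega_t)+\mathbf{n}_t$, $\mathbf{n}_t\sim\mathcal{CN}(\mathbf{0},\sigma^2\mathbf{I}_M)$, and $\alpha_t=\sum_{i\in\mathcal{S}_t}\rho_i\beta_i\tau_p+\omega_t$. It transmits $\mathbf{V}=\sqrt{q}\sum_t\frac{\mathbf{y}_t^*}{\|\mathbf{y}_t\|}\boldsymbol{\phi}_t^{\mathrm{T}}$ with orthogonal $\boldsymbol{\phi}_t$, $\|\boldsymbol{\phi}_t\|^2=\tau_p$. UE $k\in\mathcal{S}_t$ observes $z_k=\sqrt{q\tau_p}\,\mathbf{h}_k^{\mathrm{T}}\frac{\mathbf{y}_t^*}{\|\mathbf{y}_t\|}+\boldsymbol{\upsilon}_k^{\mathrm{T}}\frac{\boldsymbol{\phi}_t^*}{\|\boldsymbol{\phi}_t\|}+\eta_k$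 with $\boldsymbol{\upsilon}_k\sim\mathcal{CN}(\mathbf{0},\Upsilon_k\mathbf{I}_{\tau_p})$ independent inter-cell interference and $\eta_k\sim\mathcal{CN}(0,\sigma^2)$. Then $z_k=g_k+\nu_k$ with independent $g_k=\sqrt{\lambda_1/2}\,x$, $x\sim\chi_{2M}$, and $\nu_k\sim\mathcal{CN}(0,\lambda_2)$ (with $\alpha=\alpha_t$). UE $k$ knows $\alpha_t\ge\rho_k\beta_k\tau_p$. *)

theory Defs
  imports "HOL-Probability.Probability"
begin

definition lower_inc_gamma :: "real \<Rightarrow> real \<Rightarrow> real" where
  "lower_inc_gamma s x = integral {0..x} (\<lambda>t. t powr (s - 1) * exp (- t))"

definition chi_density :: "nat \<Rightarrow> real \<Rightarrow> real" where
  "chi_density k x = (if x > 0 then x ^ (k - 1) * exp (- (x\<^sup>2) / 2)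
                       / (2 powr (real k / 2 - 1) * Gamma (real k / 2)) else 0)"

definition c_sign :: "nat \<Rightarrow> real \<Rightarrow> real" where
  "c_sign n z = (if z \<ge> 0 then (-1) ^ n else -1)"

definition lam1 :: "real \<Rightarrow> real \<Rightarrow> real \<Rightarrow> real \<Rightarrow> real \<Rightarrow> real \<Rightarrow> real" where
  "lam1 rho q beta tp sigma2 alpha = rho * q * beta\<^sup>2 * tp\<^sup>2 / (alpha + sigma2)"

definition lam2 :: "real \<Rightarrow> real \<Rightarrow> real \<Rightarrow> real \<Rightarrow> real \<Rightarrow> real \<Rightarrow> real \<Rightarrow> real" where
  "lam2 rho q beta tp sigma2 Ups alpha =
     sigma2 + Ups + q * beta * tp - lam1 rho q beta tp sigma2 alpha"

definition f1 :: "nat \<Rightarrow> real \<Rightarrow> real \<Rightarrow> real \<Rightarrow> real" where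
  "f1 M l1 l2 z =
     exp (- (z\<^sup>2 / l2) * (1 - l1 / (l1 + l2))) / (Gamma (real M) * l1 ^ M * sqrt (pi * l2))
     * (\<Sum>n = 0..2*M-1. real ((2*M-1) choose n) *
          ((Gamma ((real n + 1) / 2)
             + c_sign n z * lower_inc_gamma ((real n + 1) / 2) (z\<^sup>2 / l2 * (l1 / (l1 + l2))))
           / ((z / l2) powi (int n + 1 - 2 * int M)
              * (1 / l1 + 1 / l2) powr (2 * real M - (real n + 1) / 2))))"

definition f2 :: "real \<Rightarrow> real \<Rightarrow> real" where
  "f2 l2 z = exp (- (z\<^sup>2) / l2) / sqrt (pi * l2)"

end

theory Submission
  imports Defs
begin


lemma gam_sub:
  fixes b :: real and n :: nat
  assumes b: "b \<ge> 0"
  shows "(\<integral>s. indicator {0..b} s * (s^n * exp (-(s\<^sup>2))) \<partial>lborel)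
          = lower_inc_gamma ((real n + 1)/2) (b\<^sup>2) / 2"
proof -
  define f where "f u = u powr ((real n + 1)/2 - 1) * exp (-u)" for u :: real
  have fnn: "0 \<le> f u" for u by (simp add: f_def)
  have int: "integrable lborel (\<lambda>s. s^n * exp (-(s\<^sup>2)) * indicator {0..b} s)"
    by (intro borel_integrable_atLeastAtMost) (auto intro!: continuous_intros)
  define I where "I = (\<integral>s. indicator {0..b} s * (s^n * exp (-(s\<^sup>2))) \<partial>lborel)"
  have I_nn: "0 \<le> I" unfolding I_def by (intro integral_nonneg_AE) (auto simp: indicator_def)
  have sub: "(\<integral>\<^sup>+x. f x * indicator {0\<^sup>2..b\<^sup>2} x \<partial>lborel) =
             (\<integral>\<^sup>+x. f (x\<^sup>2) * (2*x) * indicator {0..b} x \<partial>lborel)"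
    by (rule nn_integral_substitution[where g="\<lambda>x. x\<^sup>2" and g'="\<lambda>x. 2*x"])
       (auto simp: f_def b set_borel_measurable_def intro!: derivative_eq_intros continuous_intros)
  also have "\<dots> = (\<integral>\<^sup>+x. ennreal (2 * (indicator {0..b} x * (x^n * exp (-(x\<^sup>2))))) \<partial>lborel)"
  proof (rule nn_integral_cong_AE)
    show "AE x in lborel. ennreal (f (x\<^sup>2) * (2*x) * indicator {0..b} x) =
            ennreal (2 * (indicator {0..b} x * (x^n * exp (-(x\<^sup>2)))))"
      using AE_lborel_singleton[of 0]
    proof eventually_elim
      case (elim x)
      show ?case
      proof (cases "x \<in> {0..b}")
        case True
        then have xp: "x > 0" using elim by auto
        have "(x\<^sup>2) powr ((real n + 1)/2 - 1) * x = x ^ n"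
        proof -
          have "(x\<^sup>2) powr ((real n + 1)/2 - 1) = (x powr 2) powr ((real n + 1)/2 - 1)"
            using xp by (simp add: powr_numeral)
          also have "\<dots> = x powr (2 * ((real n + 1)/2 - 1))" by (simp add: powr_powr)
          also have "2 * ((real n + 1)/2 - 1) = real n - 1" by (simp add: field_simps)
          finally have "(x\<^sup>2) powr ((real n + 1)/2 - 1) = x powr (real n - 1)" .
          also have "\<dots> * x = x powr real n"
            using xp by (simp add: powr_diff)
          also have "\<dots> = x ^ n" using xp by (simp add: powr_realpow)
          finally show ?thesis .
        qed
        then show ?thesis using True by (simp add: f_def algebra_simps)
      qed simp
    qed
  qed
  also have "\<dots> = ennreal (2 * I)"
  proof -
    have int': "integrable lborel (\<lambda>s. indicator {0..b} s * (s^n * exp (-(s\<^sup>2))))"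
      using int by (simp add: ac_simps)
    have "(\<integral>\<^sup>+x. ennreal (2 * (indicator {0..b} x * (x^n * exp (-(x\<^sup>2))))) \<partial>lborel)
        = ennreal (\<integral>x. 2 * (indicator {0..b} x * (x^n * exp (-(x\<^sup>2)))) \<partial>lborel)"
      apply (rule nn_integral_eq_integral)
       apply (rule integrable_mult_right[OF int'])
      apply (rule AE_I2)
      apply (simp add: indicator_def)
      done
    also have "(\<integral>x. 2 * (indicator {0..b} x * (x^n * exp (-(x\<^sup>2)))) \<partial>lborel) = 2 * I"
      unfolding I_def by (rule integral_mult_right_zero)
    finally show ?thesis .
  qed
  finally have eq0: "(\<integral>\<^sup>+x. ennreal (f x * indicator {0\<^sup>2..b\<^sup>2} x) \<partial>lborel) = ennreal (2*I)" .
  then have eq: "(\<integral>\<^sup>+x. ennreal (f x * indicator {0..b\<^sup>2} x) \<partial>lborel) = ennreal (2*I)"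
    by (simp only: zero_power2)
  have "((\<lambda>x. f x * indicator {0..b\<^sup>2} x) has_integral (2*I)) UNIV"
    apply (rule nn_integral_has_integral)
    subgoal unfolding f_def by measurable
    subgoal by (simp add: f_def indicator_def)
    subgoal by (rule eq)
    subgoal by (simp add: I_nn)
    done
  then have "(f has_integral (2*I)) {0..b\<^sup>2}"
  proof -
    have "(\<lambda>x. f x * indicator {0..b\<^sup>2} x) = (\<lambda>x. if x \<in> {0..b\<^sup>2} then f x else 0)"
      by (auto simp: indicator_def)
    with \<open>((\<lambda>x. f x * indicator {0..b\<^sup>2} x) has_integral (2*I)) UNIV\<close>
    have "((\<lambda>x. if x \<in> {0..b\<^sup>2} then f x else 0) has_integral (2*I)) UNIV" by metis
    then show ?thesis by (rule has_integral_restrict_UNIV[THEN iffD1])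
  qed
  then have "lower_inc_gamma ((real n + 1)/2) (b\<^sup>2) = 2*I"
    unfolding lower_inc_gamma_def f_def by (rule integral_unique)
  then show ?thesis unfolding I_def by simp
qed



lemma gauss_integrable:
  fixes c :: real and n :: nat
  assumes c: "c > 0"
  shows "integrable lborel (\<lambda>s. s^n * exp (- c * s\<^sup>2))"
proof -
  define \<sigma> where "\<sigma> = sqrt (1/(2*c))"
  have s2: "\<sigma>\<^sup>2 = 1/(2*c)" using c by (simp add: \<sigma>_def)
  have sp: "\<sigma> > 0" using c by (simp add: \<sigma>_def)
  have i: "integrable lborel (\<lambda>x. sqrt (2*pi*\<sigma>\<^sup>2) * (normal_density 0 \<sigma> x * (x - 0)^n))"
    using sp by (intro integrable_mult_right integrable_normal_moment) auto
  have E: "sqrt (2*pi*\<sigma>\<^sup>2) * (normal_density 0 \<sigma> x * (x - 0)^n) = x^n * exp (- c * x\<^sup>2)" for x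
  proof -
    have pos: "sqrt (2*pi*\<sigma>\<^sup>2) > 0" using sp by simp
    have "- (x - 0)\<^sup>2 / (2 * \<sigma>\<^sup>2) = - c * x\<^sup>2" unfolding s2 using c by (simp add: field_simps)
    then show ?thesis using pos sp unfolding normal_density_def by (simp add: field_simps)
  qed
  have eq: "(\<lambda>x. sqrt (2*pi*\<sigma>\<^sup>2) * (normal_density 0 \<sigma> x * (x - 0)^n)) = (\<lambda>x. x^n * exp (- c * x\<^sup>2))"
    by (rule ext) (rule E)
  show ?thesis using i unfolding eq .
qed

lemma gam_int_Gamma:
  fixes a :: real assumes a: "a > 0"
  shows "integrable lborel (\<lambda>t. indicator {0..} t * (t powr (a - 1) * exp (- t)))"
    and "(\<integral>t. indicator {0..} t * (t powr (a - 1) * exp (- t)) \<partial>lborel) = Gamma a"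
proof -
  have eqf: "(\<lambda>t. indicator {0..} t * (t powr (a - 1) * exp (- t))) = (\<lambda>t. indicator {0..} t * t powr (a - 1) / exp t)"
    by (auto simp: exp_minus field_simps)
  have nn: "Gamma a = (\<integral>\<^sup>+t. ennreal (indicator {0..} t * t powr (a - 1) / exp t) \<partial>lborel)"
    by (rule Gamma_conv_nn_integral_real[OF a])
  show int: "integrable lborel (\<lambda>t. indicator {0..} t * (t powr (a - 1) * exp (- t)))"
    unfolding eqf
    apply (rule integrableI_nonneg)
    subgoal by measurable
    subgoal by (auto simp: indicator_def)
    subgoal by (simp only: nn[symmetric]) simp
    done
  have "ennreal (\<integral>t. indicator {0..} t * (t powr (a - 1) * exp (- t)) \<partial>lborel) = ennreal (Gamma a)"
    using int unfolding eqf
    by (subst nn_integral_eq_integral[symmetric]) (auto simp: nn indicator_def)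
  then show "(\<integral>t. indicator {0..} t * (t powr (a - 1) * exp (- t)) \<partial>lborel) = Gamma a"
    using Gamma_real_pos[OF a]
    by (subst (asm) ennreal_inj) (auto intro!: integral_nonneg_AE simp: indicator_def)
qed



lemma lig_eq:
  fixes a x :: real assumes a: "a > 0"
  shows "lower_inc_gamma a x = (\<integral>t. indicator {..x} t *\<^sub>R (indicator {0..} t * (t powr (a - 1) * exp (- t))) \<partial>lborel)"
proof -
  have si: "set_integrable lborel {0..x} (\<lambda>t. t powr (a - 1) * exp (- t))"
  proof -
    have "integrable lborel (\<lambda>t. indicator {..x} t *\<^sub>R (indicator {0..} t * (t powr (a - 1) * exp (- t))))"
      by (intro integrable_mult_indicator gam_int_Gamma(1)[OF a]) auto
    moreover have "(\<lambda>t. indicator {..x} t *\<^sub>R (indicator {0..} t * (t powr (a - 1) * exp (- t))))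
        = (\<lambda>t. indicator {0..x} t *\<^sub>R (t powr (a - 1) * exp (- t)))"
      by (auto simp: indicator_def)
    ultimately show ?thesis unfolding set_integrable_def by simp
  qed
  have "lower_inc_gamma a x = (LINT t:{0..x}|lborel. t powr (a - 1) * exp (- t))"
    unfolding lower_inc_gamma_def by (rule set_borel_integral_eq_integral(2)[OF si, symmetric])
  also have "\<dots> = (\<integral>t. indicator {..x} t *\<^sub>R (indicator {0..} t * (t powr (a - 1) * exp (- t))) \<partial>lborel)"
    unfolding set_lebesgue_integral_def by (intro Bochner_Integration.integral_cong) (auto simp: indicator_def)
  finally show ?thesis .
qed

lemma gam_full:
  fixes n :: nat
  shows "(\<integral>s. indicator {0..} s * ((s::real)^n * exp (-(s\<^sup>2))) \<partial>lborel) = Gamma ((real n + 1)/2) / 2"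
proof -
  define a where "a = (real n + 1)/2"
  have a: "a > 0" by (simp add: a_def)
  have t1: "((\<lambda>x. lower_inc_gamma a x) \<longlongrightarrow> Gamma a) at_top"
    unfolding lig_eq[OF a] gam_int_Gamma(2)[OF a, symmetric]
    by (rule tendsto_integral_at_top) (auto intro: gam_int_Gamma(1)[OF a])
  have sq: "filterlim (\<lambda>b::real. b\<^sup>2) at_top at_top" by real_asymp
  have t2: "((\<lambda>b. lower_inc_gamma a (b\<^sup>2) / 2) \<longlongrightarrow> Gamma a / 2) at_top"
    by (intro tendsto_divide tendsto_const filterlim_compose[OF t1 sq]) simp
  have ig: "integrable lborel (\<lambda>s::real. indicator {0..} s * ((s::real)^n * exp (-(s\<^sup>2))))"
  proof -
    have g: "integrable lborel (\<lambda>s::real. s^n * exp (-(s\<^sup>2)))" using gauss_integrable[of 1 n, simplified] by assumption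
    have "integrable lborel (\<lambda>s::real. indicator {0..} s *\<^sub>R ((s::real)^n * exp (-(s\<^sup>2))))"
      by (rule integrable_mult_indicator[OF _ g]) measurable
    then show ?thesis by simp
  qed
  have t3: "((\<lambda>b. \<integral>s. indicator {..b} s *\<^sub>R (indicator {0..} s * ((s::real)^n * exp (-(s\<^sup>2)))) \<partial>lborel)
      \<longlongrightarrow> (\<integral>s. indicator {0..} s * ((s::real)^n * exp (-(s\<^sup>2))) \<partial>lborel)) at_top"
    by (rule tendsto_integral_at_top) (auto intro: ig)
  have ev: "\<forall>\<^sub>F b in at_top. (\<integral>s. indicator {..b} s *\<^sub>R (indicator {0..} s * ((s::real)^n * exp (-(s\<^sup>2)))) \<partial>lborel)
       = lower_inc_gamma a (b\<^sup>2) / 2"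
    using eventually_ge_at_top[of "0::real"]
  proof eventually_elim
    case (elim b)
    have "(\<integral>s. indicator {..b} s *\<^sub>R (indicator {0..} s * ((s::real)^n * exp (-(s\<^sup>2)))) \<partial>lborel)
        = (\<integral>s. indicator {0..b} s * ((s::real)^n * exp (-(s\<^sup>2))) \<partial>lborel)"
      by (intro Bochner_Integration.integral_cong) (auto simp: indicator_def)
    also have "\<dots> = lower_inc_gamma a (b\<^sup>2) / 2" unfolding a_def by (rule gam_sub[OF elim])
    finally show ?case .
  qed
  have t4: "((\<lambda>b. lower_inc_gamma a (b\<^sup>2) / 2)
      \<longlongrightarrow> (\<integral>s. indicator {0..} s * ((s::real)^n * exp (-(s\<^sup>2))) \<partial>lborel)) at_top"
    using tendsto_cong[OF ev] t3 by simp
  show ?thesis using tendsto_unique[OF _ t4 t2] unfolding a_def by simp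
qed



lemma intind:
  fixes A :: "real set" and n :: nat and k :: real
  assumes "A \<in> sets borel" "k > 0"
  shows "integrable lborel (\<lambda>s. indicator A s * (s^n * exp (- k * s\<^sup>2)))"
proof -
  have "integrable lborel (\<lambda>s. indicator A s *\<^sub>R (s^n * exp (- k * s\<^sup>2)))"
    using assms by (intro integrable_mult_indicator gauss_integrable) auto
  then show ?thesis by simp
qed

lemma intind1:
  fixes A :: "real set" and n :: nat
  assumes "A \<in> sets borel"
  shows "integrable lborel (\<lambda>s. indicator A s * (s^n * exp (-(s\<^sup>2))))"
  using intind[OF assms, of 1 n] by simp

lemma half_int:
  fixes b :: real and n :: nat
  shows "(\<integral>s. indicator {-b<..} s * (s^n * exp (-(s\<^sup>2))) \<partial>lborel)
       = (Gamma ((real n + 1)/2) + c_sign n b * lower_inc_gamma ((real n + 1)/2) (b\<^sup>2)) / 2"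
proof (cases "b \<ge> 0")
  case True
  have refl: "(\<integral>s. indicator {-b<..<0} s * (s^n * exp (-(s\<^sup>2))) \<partial>lborel)
      = (-1)^n * (\<integral>s. indicator {0..b} s * (s^n * exp (-(s\<^sup>2))) \<partial>lborel)"
  proof -
    have "(\<integral>s. indicator {-b<..<0} s * (s^n * exp (-(s\<^sup>2))) \<partial>lborel)
       = \<bar>-1\<bar> *\<^sub>R (\<integral>x. indicator {-b<..<0} (0 + -1*x) * ((0 + -1*x)^n * exp (-((0 + -1*x)\<^sup>2))) \<partial>lborel)"
      by (rule lborel_integral_real_affine) simp
    also have "\<dots> = (\<integral>x. indicator {-b<..<0} (0 + -1*x) * ((0 + -1*x)^n * exp (-((0 + -1*x)\<^sup>2))) \<partial>lborel)"
      by (simp only: abs_neg_one scaleR_one)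
    also have "\<dots> = (\<integral>x. (-1)^n * (indicator {0..b} x * (x^n * exp (-(x\<^sup>2)))) \<partial>lborel)"
    proof (rule integral_cong_AE)
      show "AE x in lborel. indicator {-b<..<0} (0 + -1*x) * ((0 + -1*x)^n * exp (-((0 + -1*x)\<^sup>2)))
          = (-1)^n * (indicator {0..b} x * (x^n * exp (-(x\<^sup>2))))"
        using AE_lborel_singleton[of 0] AE_lborel_singleton[of b]
      proof eventually_elim
        case (elim x)
        have e1: "0 + -1*x = -x" by simp
        have e2: "(-x)^n = (-1)^n * x^n" by (rule power_minus)
        have e3: "indicator {-b<..<0} (-x) = (indicator {0..b} x :: real)"
          using elim by (auto simp: indicator_def)
        have e4: "(-x)\<^sup>2 = x\<^sup>2" by simp
        show ?case unfolding e1 e2 e3 e4 by (simp only: ac_simps)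
      qed
    qed auto
    also have "\<dots> = (-1)^n * (\<integral>s. indicator {0..b} s * (s^n * exp (-(s\<^sup>2))) \<partial>lborel)"
      by (rule integral_mult_right_zero)
    finally show ?thesis .
  qed
  have "(\<integral>s. indicator {-b<..} s * (s^n * exp (-(s\<^sup>2))) \<partial>lborel)
      = (\<integral>s. indicator {0..} s * (s^n * exp (-(s\<^sup>2))) + indicator {-b<..<0} s * (s^n * exp (-(s\<^sup>2))) \<partial>lborel)"
    apply (rule integral_cong_AE)
    subgoal by measurable
    subgoal by measurable
    apply (rule AE_mp[OF AE_lborel_singleton[of 0]])
    apply (rule AE_I2)
    using True by (auto simp: indicator_def)
  also have "\<dots> = (\<integral>s. indicator {0..} s * (s^n * exp (-(s\<^sup>2))) \<partial>lborel)
       + (\<integral>s. indicator {-b<..<0} s * (s^n * exp (-(s\<^sup>2))) \<partial>lborel)"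
    by (intro Bochner_Integration.integral_add intind1) auto
  also have "\<dots> = Gamma ((real n + 1)/2) / 2 + (-1)^n * (lower_inc_gamma ((real n + 1)/2) (b\<^sup>2) / 2)"
    unfolding refl gam_full gam_sub[OF True] ..
  finally show ?thesis using True by (simp add: c_sign_def field_simps)
next
  case False
  then have nb: "-b \<ge> 0" by simp
  have "(\<integral>s. indicator {-b<..} s * (s^n * exp (-(s\<^sup>2))) \<partial>lborel)
      = (\<integral>s. indicator {0..} s * (s^n * exp (-(s\<^sup>2))) - indicator {0..-b} s * (s^n * exp (-(s\<^sup>2))) \<partial>lborel)"
    using False by (intro Bochner_Integration.integral_cong) (auto simp: indicator_def)
  also have "\<dots> = (\<integral>s. indicator {0..} s * (s^n * exp (-(s\<^sup>2))) \<partial>lborel)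
       - (\<integral>s. indicator {0..-b} s * (s^n * exp (-(s\<^sup>2))) \<partial>lborel)"
    by (intro Bochner_Integration.integral_diff intind1) auto
  also have "\<dots> = Gamma ((real n + 1)/2) / 2 - lower_inc_gamma ((real n + 1)/2) ((-b)\<^sup>2) / 2"
    unfolding gam_full gam_sub[OF nb] ..
  finally show ?thesis using False by (simp add: c_sign_def field_simps)
qed



lemma scale_int:
  fixes k m :: real and n :: nat
  assumes k: "k > 0"
  shows "(\<integral>t. indicator {-m<..} t * (t^n * exp (- k * t\<^sup>2)) \<partial>lborel)
       = (1 / sqrt k)^(n+1) * (\<integral>s. indicator {-(m * sqrt k)<..} s * (s^n * exp (-(s\<^sup>2))) \<partial>lborel)"
proof -
  define c where "c = 1 / sqrt k"
  have c: "c > 0" using k by (simp add: c_def)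
  have kc: "k * c\<^sup>2 = 1" using k by (simp add: c_def power_divide)
  have "(\<integral>t. indicator {-m<..} t * (t^n * exp (- k * t\<^sup>2)) \<partial>lborel)
      = \<bar>c\<bar> *\<^sub>R (\<integral>x. indicator {-m<..} (0 + c * x) * ((0 + c * x)^n * exp (- k * (0 + c * x)\<^sup>2)) \<partial>lborel)"
    using c by (intro lborel_integral_real_affine) simp
  also have "\<dots> = c * (\<integral>x. c^n * (indicator {-(m * sqrt k)<..} x * (x^n * exp (-(x\<^sup>2)))) \<partial>lborel)"
  proof -
    have "indicator {-m<..} (0 + c * x) * ((0 + c * x)^n * exp (- k * (0 + c * x)\<^sup>2))
        = c^n * (indicator {-(m * sqrt k)<..} x * (x^n * exp (-(x\<^sup>2))))" for x
    proof -
      have i: "(indicator {-m<..} (c * x) :: real) = indicator {-(m * sqrt k)<..} x"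
      proof -
        have "(-m < c * x) \<longleftrightarrow> (-(m * sqrt k) < x)"
          using k by (simp add: c_def field_simps)
        then show ?thesis by (simp add: indicator_def)
      qed
      have e: "k * (c * x)\<^sup>2 = x\<^sup>2" using kc by (simp add: power_mult_distrib)
      show ?thesis using i e by (simp add: power_mult_distrib ac_simps)
    qed
    then show ?thesis using c by simp
  qed
  also have "\<dots> = c^(n+1) * (\<integral>s. indicator {-(m * sqrt k)<..} s * (s^n * exp (-(s\<^sup>2))) \<partial>lborel)"
    by (simp add: integral_mult_right_zero)
  finally show ?thesis unfolding c_def .
qed

lemma expand_int:
  fixes k m :: real and N :: nat
  assumes k: "k > 0"
  shows "integrable lborel (\<lambda>y. indicator {0<..} y * (y^N * exp (- k * (y - m)\<^sup>2)))"
    and "(\<integral>y. indicator {0<..} y * (y^N * exp (- k * (y - m)\<^sup>2)) \<partial>lborel)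
       = (\<Sum>n\<le>N. real (N choose n) * m^(N-n) * (\<integral>t. indicator {-m<..} t * (t^n * exp (- k * t\<^sup>2)) \<partial>lborel))"
proof -
  define P where "P t = indicator {-m<..} t * ((t + m)^N * exp (- k * t\<^sup>2))" for t :: real
  have Psum: "P t = (\<Sum>n\<le>N. real (N choose n) * m^(N-n) * (indicator {-m<..} t * (t^n * exp (- k * t\<^sup>2))))" for t
    unfolding P_def binomial_ring by (simp add: sum_distrib_left sum_distrib_right ac_simps)
  have Pfun: "P = (\<lambda>t. \<Sum>n\<le>N. real (N choose n) * m^(N-n) * (indicator {-m<..} t * (t^n * exp (- k * t\<^sup>2))))"
    using Psum by auto
  have Pint: "integrable lborel P"
    unfolding Pfun using k by (intro Bochner_Integration.integrable_sum integrable_mult_right intind) auto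
  have PI: "(\<integral>t. P t \<partial>lborel) = (\<Sum>n\<le>N. real (N choose n) * m^(N-n) * (\<integral>t. indicator {-m<..} t * (t^n * exp (- k * t\<^sup>2)) \<partial>lborel))"
    unfolding Pfun using k
    by (subst Bochner_Integration.integral_sum) (auto intro!: integrable_mult_right intind intind[simplified] simp: integral_mult_right_zero)
  have shift: "(\<lambda>y. P (-m + 1 * y)) = (\<lambda>y. indicator {0<..} y * (y^N * exp (- k * (y - m)\<^sup>2)))"
    by (auto simp: P_def indicator_def fun_eq_iff)
  show "integrable lborel (\<lambda>y. indicator {0<..} y * (y^N * exp (- k * (y - m)\<^sup>2)))"
    unfolding shift[symmetric] by (rule lborel_integrable_real_affine[OF Pint]) simp
  have "(\<integral>t. P t \<partial>lborel) = \<bar>1\<bar> *\<^sub>R (\<integral>y. P (-m + 1 * y) \<partial>lborel)"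
    by (rule lborel_integral_real_affine) simp
  then have "(\<integral>t. P t \<partial>lborel) = (\<integral>y. indicator {0<..} y * (y^N * exp (- k * (y - m)\<^sup>2)) \<partial>lborel)"
    unfolding shift by simp
  with PI show "(\<integral>y. indicator {0<..} y * (y^N * exp (- k * (y - m)\<^sup>2)) \<partial>lborel)
       = (\<Sum>n\<le>N. real (N choose n) * m^(N-n) * (\<integral>t. indicator {-m<..} t * (t^n * exp (- k * t\<^sup>2)) \<partial>lborel))"
    by simp
qed



lemma powi_neg:
  fixes w :: real and n M :: nat
  assumes "n \<le> 2*M - 1" "M \<ge> 1"
  shows "w powi (int n + 1 - 2 * int M) = inverse (w ^ (2*M - 1 - n))"
proof -
  have h: "int n + 1 - 2 * int M = - int (2*M - 1 - n)" using assms by simp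
  show ?thesis unfolding h power_int_minus power_int_of_nat ..
qed

lemma powr_split:
  fixes k :: real and n M :: nat
  assumes "n \<le> 2*M - 1" "M \<ge> 1" "k > 0"
  shows "k powr (2 * real M - (real n + 1)/2) = k^(2*M - 1 - n) * (sqrt k)^(n+1)"
proof -
  have e: "2 * real M - (real n + 1)/2 = real (2*M - 1 - n) + (real n + 1)/2"
    using assms by (simp add: of_nat_diff field_simps)
  have s: "(sqrt k)^(n+1) = k powr ((real n + 1)/2)"
  proof -
    have "(sqrt k)^(n+1) = (k powr (1/2))^(n+1)" using assms by (simp add: powr_half_sqrt)
    also have "\<dots> = (k powr (1/2)) powr real (n+1)" by (rule powr_realpow[symmetric]) (use assms in simp)
    also have "\<dots> = k powr ((1/2) * real (n+1))" by (rule powr_powr)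
    also have "(1/2) * real (n+1) = (real n + 1)/2" by simp
    finally show ?thesis .
  qed
  have p: "k powr real (2*M - 1 - n) = k^(2*M - 1 - n)" by (rule powr_realpow) (use assms in simp)
  show ?thesis unfolding e powr_add s p ..
qed

lemma term_eq:
  fixes z l1 l2 X :: real and n M :: nat
  assumes n: "n \<le> 2*M - 1" and M: "M \<ge> 1" and l1: "l1 > 0" and l2: "l2 > 0"
  defines "k \<equiv> 1/l1 + 1/l2"
  defines "m \<equiv> z / (l2 * k)"
  shows "m^(2*M - 1 - n) * (1 / sqrt k)^(n+1) * X
       = X / ((z / l2) powi (int n + 1 - 2 * int M) * (1/l1 + 1/l2) powr (2 * real M - (real n + 1)/2))"
proof -
  have k: "k > 0" unfolding k_def using l1 l2 by (intro add_pos_pos) auto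
  have k': "1/l1 + 1/l2 > 0" using k by (simp add: k_def)
  have m: "m = (z/l2) / k" by (simp add: m_def)
  have "X / ((z / l2) powi (int n + 1 - 2 * int M) * (1/l1 + 1/l2) powr (2 * real M - (real n + 1)/2))
      = X / (inverse ((z/l2)^(2*M - 1 - n)) * (k^(2*M - 1 - n) * (sqrt k)^(n+1)))"
    unfolding powi_neg[OF n M] powr_split[OF n M k'] k_def ..
  also have "\<dots> = X * (z/l2)^(2*M - 1 - n) / (k^(2*M - 1 - n) * (sqrt k)^(n+1))"
    by (simp add: divide_inverse inverse_mult_distrib)
  also have "\<dots> = m^(2*M - 1 - n) * (1 / sqrt k)^(n+1) * X"
    unfolding m using k by (simp add: power_divide field_simps)
  finally show ?thesis ..
qed



lemma exponent_aux:
  fixes z y l1 l2 S :: real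
  assumes l1: "l1 > 0" and l2: "l2 > 0" and S: "S = l1 + l2"
  shows "-((z - y)\<^sup>2 / l2) - y\<^sup>2 / l1
       = -(z\<^sup>2 / l2) * (1 - l1 / S) - (S / (l1 * l2)) * (y - z * l1 / S)\<^sup>2"
proof -
  have Sp: "S > 0" using S l1 l2 by simp
  have "(-((z - y)\<^sup>2 / l2) - y\<^sup>2 / l1) * (l1 * l2 * S) = - (z - y)\<^sup>2 * l1 * S - y\<^sup>2 * l2 * S"
    using l1 l2 by (simp add: field_simps)
  also have "\<dots> = (-(z\<^sup>2 / l2) * (1 - l1 / S) - (S / (l1 * l2)) * (y - z * l1 / S)\<^sup>2) * (l1 * l2 * S)"
  proof -
    have "(-(z\<^sup>2 / l2) * (1 - l1 / S) - (S / (l1 * l2)) * (y - z * l1 / S)\<^sup>2) * (l1 * l2 * S)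
        = - z\<^sup>2 * l1 * (S - l1) - (y * S - z * l1)\<^sup>2"
      using l1 l2 Sp by (simp add: field_simps power2_eq_square)
    also have "\<dots> = - (z - y)\<^sup>2 * l1 * S - y\<^sup>2 * l2 * S"
      unfolding S by (simp add: power2_eq_square algebra_simps)
    finally show ?thesis ..
  qed
  finally show ?thesis using l1 l2 Sp by simp
qed

lemma exponent_id:
  fixes z y l1 l2 :: real
  assumes l1: "l1 > 0" and l2: "l2 > 0"
  shows "-((z - y)\<^sup>2 / l2) - y\<^sup>2 / l1
       = -(z\<^sup>2 / l2) * (1 - l1 / (l1 + l2)) - (1/l1 + 1/l2) * (y - z / (l2 * (1/l1 + 1/l2)))\<^sup>2"
proof -
  have s: "l1 + l2 > 0" using l1 l2 by simp
  have k: "1/l1 + 1/l2 = (l1 + l2) / (l1 * l2)" using l1 l2 by (simp add: field_simps)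
  have m0: "l2 * (1/l1 + 1/l2) = (l1 + l2) / l1" using l1 l2 by (simp add: field_simps)
  have m: "z / (l2 * (1/l1 + 1/l2)) = z * l1 / (l1 + l2)" unfolding m0 using l1 s by simp
  show ?thesis unfolding m unfolding k by (rule exponent_aux[OF l1 l2 refl])
qed

lemma normal_eq:
  fixes l2 x :: real assumes l2: "l2 > 0"
  shows "normal_density 0 (sqrt l2 * sqrt (1/2)) x = exp (-(x\<^sup>2 / l2)) / sqrt (pi * l2)"
proof -
  have s2: "(sqrt l2 * sqrt (1/2))\<^sup>2 = l2 / 2" using l2 by (simp add: power_mult_distrib)
  have "2 * pi * (l2/2) = pi * l2" by simp
  then show ?thesis unfolding normal_density_def s2 by (simp add: field_simps)
qed

lemma chi_eq:
  fixes l1 y :: real and M :: nat assumes l1: "l1 > 0" and M: "M \<ge> 1"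
  shows "chi_density (2*M) (y / sqrt (l1/2)) / sqrt (l1/2)
       = (if y > 0 then 2 * y^(2*M-1) * exp (-(y\<^sup>2 / l1)) / (l1^M * Gamma (real M)) else 0)"
proof (cases "y > 0")
  case True
  define c where "c = sqrt (l1/2)"
  have c: "c > 0" using l1 by (simp add: c_def)
  have c2: "c\<^sup>2 = l1/2" using l1 by (simp add: c_def)
  have cM: "c^(2*M-1) * c = (l1/2)^M"
  proof -
    have "c^(2*M-1) * c = c^(2*M)" using M by (simp add: power_Suc2[symmetric])
    also have "\<dots> = (c\<^sup>2)^M" by (simp add: power_mult)
    finally show ?thesis unfolding c2 .
  qed
  have p2: "(2::real) powr (real (2*M) / 2 - 1) = 2^M / 2"
  proof -
    have "real (2*M)/2 - 1 = real M - 1" by simp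
    then have "(2::real) powr (real (2*M) / 2 - 1) = 2 powr real M / 2" by (simp add: powr_diff)
    then show ?thesis by (simp add: powr_realpow)
  qed
  have g: "Gamma (real (2*M) / 2) = Gamma (real M)" by simp
  have ex: "(y / c)\<^sup>2 / 2 = y\<^sup>2 / l1" using c2 c l1 by (simp add: power_divide field_simps)
  have yc: "y / c > 0" using True c by simp
  have "chi_density (2*M) (y / c) / c
      = (y/c)^(2*M-1) * exp (-((y/c)\<^sup>2) / 2) / (2^M / 2 * Gamma (real M)) / c"
    unfolding chi_density_def p2 g using yc by simp
  also have "\<dots> = 2 * y^(2*M-1) * exp (-(y\<^sup>2 / l1)) / ((c^(2*M-1) * c * 2^M) * Gamma (real M))"
    using c ex by (simp add: power_divide field_simps)
  also have "\<dots> = 2 * y^(2*M-1) * exp (-(y\<^sup>2 / l1)) / (l1^M * Gamma (real M))"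
    unfolding cM by (simp add: power_divide)
  finally show ?thesis using True by (simp add: c_def)
next
  case False
  have "\<not> (y / sqrt (l1/2) > 0)" using False l1 by (auto simp: zero_less_divide_iff)
  then show ?thesis using False by (simp add: chi_density_def)
qed



lemma conv_real:
  fixes z l1 l2 :: real and M :: nat
  assumes l1: "l1 > 0" and l2: "l2 > 0" and M: "M \<ge> 1"
  defines "G \<equiv> (\<lambda>y. normal_density 0 (sqrt l2 * sqrt (1/2)) (z - y) * (chi_density (2*M) (y / sqrt (l1/2)) / sqrt (l1/2)))"
  shows "integrable lborel G" and "(\<integral>y. G y \<partial>lborel) = f1 M l1 l2 z"
proof -
  define k where "k = 1/l1 + 1/l2"
  define m where "m = z / (l2 * k)"
  define N where "N = 2*M - 1"
  define E where "E = exp (- (z\<^sup>2 / l2) * (1 - l1 / (l1 + l2)))"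
  define P where "P = E / (Gamma (real M) * l1 ^ M * sqrt (pi * l2))"
  have k: "k > 0" unfolding k_def using l1 l2 by (intro add_pos_pos) auto
  have Gform: "G y = (2*P) * (indicator {0<..} y * (y^N * exp (- k * (y - m)\<^sup>2)))" for y
  proof (cases "y > 0")
    case True
    have ex: "exp (-((z - y)\<^sup>2 / l2)) * exp (-(y\<^sup>2 / l1)) = E * exp (- k * (y - m)\<^sup>2)"
      unfolding E_def exp_add[symmetric] m_def k_def
      using exponent_id[OF l1 l2, of z y] by (simp add: algebra_simps)
    have "G y = exp (-((z - y)\<^sup>2 / l2)) / sqrt (pi * l2) * (2 * y^N * exp (-(y\<^sup>2 / l1)) / (l1^M * Gamma (real M)))"
      unfolding G_def normal_eq[OF l2] chi_eq[OF l1 M] N_def using True by simp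
    also have "\<dots> = 2 / (sqrt (pi * l2) * (l1^M * Gamma (real M))) * y^N * (exp (-((z - y)\<^sup>2 / l2)) * exp (-(y\<^sup>2 / l1)))"
      by (simp add: field_simps)
    also have "\<dots> = (2*P) * (indicator {0<..} y * (y^N * exp (- k * (y - m)\<^sup>2)))"
      unfolding ex P_def using True by (simp add: field_simps)
    finally show ?thesis .
  next
    case False
    then show ?thesis unfolding G_def chi_eq[OF l1 M] by simp
  qed
  have Gfun: "G = (\<lambda>y. (2*P) * (indicator {0<..} y * (y^N * exp (- k * (y - m)\<^sup>2))))"
    using Gform by auto
  show "integrable lborel G"
    unfolding Gfun by (intro integrable_mult_right expand_int(1)[OF k])
  have mk_sign: "(m * sqrt k \<ge> 0) \<longleftrightarrow> (z \<ge> 0)"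
  proof -
    have lk: "l2 * k > 0" using l2 k by simp
    have sk: "sqrt k > 0" using k by simp
    define q where "q = sqrt k / (l2 * k)"
    have q: "q > 0" unfolding q_def using lk sk by simp
    have "m * sqrt k = z * q" by (simp add: m_def q_def)
    then show ?thesis using q by (simp add: zero_le_mult_iff)
  qed
  have mk_sq: "(m * sqrt k)\<^sup>2 = z\<^sup>2 / l2 * (l1 / (l1 + l2))"
  proof -
    have m0: "l2 * k = (l1 + l2) / l1" unfolding k_def using l1 l2 by (simp add: field_simps)
    have "(m * sqrt k)\<^sup>2 = z\<^sup>2 / (l2 * k)\<^sup>2 * k" unfolding m_def using k by (simp add: power_mult_distrib power_divide)
    also have "\<dots> = z\<^sup>2 / (l2 * (l2 * k))" using k l2 by (simp add: power2_eq_square field_simps)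
    also have "\<dots> = z\<^sup>2 / l2 * (l1 / (l1 + l2))" unfolding m0 using l1 l2 by (simp add: field_simps)
    finally show ?thesis .
  qed
  define X where "X n = Gamma ((real n + 1)/2) + c_sign n z * lower_inc_gamma ((real n + 1)/2) (z\<^sup>2 / l2 * (l1 / (l1 + l2)))" for n :: nat
  have cs: "c_sign n (m * sqrt k) = c_sign n z" for n unfolding c_sign_def using mk_sign by simp
  have "(\<integral>y. G y \<partial>lborel) = (2*P) * (\<integral>y. indicator {0<..} y * (y^N * exp (- k * (y - m)\<^sup>2)) \<partial>lborel)"
    unfolding Gfun by (rule integral_mult_right_zero)
  also have "\<dots> = (2*P) * (\<Sum>n\<le>N. real (N choose n) * m^(N-n) * ((1 / sqrt k)^(n+1) * (X n / 2)))"
    unfolding expand_int(2)[OF k] scale_int[OF k] half_int cs mk_sq X_def ..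
  also have "\<dots> = P * (\<Sum>n\<le>N. real (N choose n) * (m^(N-n) * (1 / sqrt k)^(n+1) * X n))"
    by (simp add: sum_distrib_left ac_simps)
  also have "\<dots> = P * (\<Sum>n\<le>N. real (N choose n) * (X n / ((z / l2) powi (int n + 1 - 2 * int M) * (1/l1 + 1/l2) powr (2 * real M - (real n + 1)/2))))"
  proof -
    have "m^(N-n) * (1 / sqrt k)^(n+1) * X n = X n / ((z / l2) powi (int n + 1 - 2 * int M) * (1/l1 + 1/l2) powr (2 * real M - (real n + 1)/2))"
      if "n \<in> {..N}" for n
      using that unfolding N_def m_def k_def by (intro term_eq[OF _ M l1 l2]) auto
    then show ?thesis by simp
  qed
  also have "\<dots> = f1 M l1 l2 z"
    unfolding f1_def P_def E_def X_def N_def atLeast0AtMost ..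
  finally show "(\<integral>y. G y \<partial>lborel) = f1 M l1 l2 z" .
qed



lemma chi_nonneg: "chi_density k x \<ge> 0"
proof -
  have g: "Gamma (real k / 2) \<ge> 0"
  proof (cases "k = 0")
    case True then show ?thesis by simp
  next
    case False then show ?thesis by (intro less_imp_le Gamma_real_pos) simp
  qed
  show ?thesis unfolding chi_density_def using g by (auto intro!: divide_nonneg_nonneg mult_nonneg_nonneg)
qed

lemma lam_pos:
  fixes rho beta q sigma2 Ups alpha :: real and tp :: nat
  assumes "tp \<ge> 1" "rho > 0" "beta > 0" "q > 0" "sigma2 > 0" "Ups \<ge> 0"
    and al: "alpha \<ge> rho * beta * real tp"
  shows "lam1 rho q beta (real tp) sigma2 alpha > 0"
    and "lam2 rho q beta (real tp) sigma2 Ups alpha > 0"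
proof -
  have t: "real tp > 0" using assms by simp
  have rbt: "rho * beta * real tp > 0" using assms t by simp
  have den: "alpha + sigma2 > rho * beta * real tp" using al assms by simp
  have dp: "alpha + sigma2 > 0" using den rbt by simp
  have num: "rho * q * beta\<^sup>2 * (real tp)\<^sup>2 > 0" using assms t by simp
  show "lam1 rho q beta (real tp) sigma2 alpha > 0"
    unfolding lam1_def using num dp by simp
  have "lam1 rho q beta (real tp) sigma2 alpha < rho * q * beta\<^sup>2 * (real tp)\<^sup>2 / (rho * beta * real tp)"
    unfolding lam1_def using num den rbt by (intro divide_strict_left_mono) auto
  also have "\<dots> = q * beta * real tp" using assms t by (simp add: power2_eq_square field_simps)
  finally have "lam1 rho q beta (real tp) sigma2 alpha < q * beta * real tp" .
  then show "lam2 rho q beta (real tp) sigma2 Ups alpha > 0"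
    unfolding lam2_def using assms by simp
qed

theorem theorem1:
  fixes P :: "'a measure" and X W1 W2 :: "'a \<Rightarrow> real"
    and M tp :: nat and rho beta q sigma2 Ups :: real
  assumes "prob_space P"
    and "M \<ge> 1" and "tp \<ge> 1"
    and "rho > 0" and "beta > 0" and "q > 0" and "sigma2 > 0" and "Ups \<ge> 0"
    and "distributed P lborel X (\<lambda>x. ennreal (chi_density (2 * M) x))"
    and "distributed P lborel W1 (\<lambda>x. ennreal (normal_density 0 (sqrt (1/2)) x))"
    and "distributed P lborel W2 (\<lambda>x. ennreal (normal_density 0 (sqrt (1/2)) x))"
    and "prob_space.indep_vars P (\<lambda>_. borel)
           (\<lambda>i. if i = (0::nat) then X else if i = 1 then W1 else W2) {0, 1, 2}"
  shows "\<forall>alpha \<ge> rho * beta * real tp.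
    (let l1 = lam1 rho q beta (real tp) sigma2 alpha;
         l2 = lam2 rho q beta (real tp) sigma2 Ups alpha;
         z = (\<lambda>\<omega>. complex_of_real (sqrt (l1 / 2) * X \<omega>)
                   + complex_of_real (sqrt l2) * Complex (W1 \<omega>) (W2 \<omega>))
     in distributed P (lborel \<Otimes>\<^sub>M lborel) (\<lambda>\<omega>. (Re (z \<omega>), Im (z \<omega>)))
          (\<lambda>(a, b). ennreal (f1 M l1 l2 a * f2 l2 b)))"
proof (intro allI impI)
  interpret prob_space P by fact
  fix alpha assume al: "alpha \<ge> rho * beta * real tp"
  define l1 where "l1 = lam1 rho q beta (real tp) sigma2 alpha"
  define l2 where "l2 = lam2 rho q beta (real tp) sigma2 Ups alpha"
  have l1: "l1 > 0" unfolding l1_def using lam_pos(1)[OF assms(3-8) al] .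
  have l2: "l2 > 0" unfolding l2_def using lam_pos(2)[OF assms(3-8) al] .
  define c where "c = sqrt (l1/2)"
  define d where "d = sqrt l2"
  have c: "c > 0" using l1 by (simp add: c_def)
  have d: "d > 0" using l2 by (simp add: d_def)
  define Xf where "Xf = (\<lambda>i. if i = (0::nat) then X else if i = 1 then W1 else W2)"
  have ind: "indep_vars (\<lambda>_. borel) Xf {0, 1, 2}" using assms(12) unfolding Xf_def .
  note DX = assms(9) and DW1 = assms(10) and DW2 = assms(11)
  have I1: "indep_var borel (\<lambda>\<omega>. d * W1 \<omega>) borel (\<lambda>\<omega>. c * X \<omega>)"
  proof -
    have "indep_var borel ((\<lambda>f. d * f 1) \<circ> (\<lambda>\<omega>. restrict (\<lambda>i. Xf i \<omega>) {1}))
                    borel ((\<lambda>f. c * f 0) \<circ> (\<lambda>\<omega>. restrict (\<lambda>i. Xf i \<omega>) {0}))"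
      by (intro indep_var_compose[OF indep_var_restrict[OF ind]]) auto
    also have "((\<lambda>f. d * f 1) \<circ> (\<lambda>\<omega>. restrict (\<lambda>i. Xf i \<omega>) {1})) = (\<lambda>\<omega>. d * W1 \<omega>)"
      by (auto simp: Xf_def)
    also have "((\<lambda>f. c * f 0) \<circ> (\<lambda>\<omega>. restrict (\<lambda>i. Xf i \<omega>) {0})) = (\<lambda>\<omega>. c * X \<omega>)"
      by (auto simp: Xf_def)
    finally show ?thesis .
  qed
  have I2: "indep_var borel (\<lambda>\<omega>. d * W1 \<omega> + c * X \<omega>) borel (\<lambda>\<omega>. d * W2 \<omega>)"
  proof -
    have "indep_var borel ((\<lambda>f. d * f 1 + c * f 0) \<circ> (\<lambda>\<omega>. restrict (\<lambda>i. Xf i \<omega>) {0, 1}))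
                    borel ((\<lambda>f. d * f 2) \<circ> (\<lambda>\<omega>. restrict (\<lambda>i. Xf i \<omega>) {2}))"
      by (intro indep_var_compose[OF indep_var_restrict[OF ind]]) auto
    also have "((\<lambda>f. d * f 1 + c * f 0) \<circ> (\<lambda>\<omega>. restrict (\<lambda>i. Xf i \<omega>) {0, 1})) = (\<lambda>\<omega>. d * W1 \<omega> + c * X \<omega>)"
      by (auto simp: Xf_def)
    also have "((\<lambda>f. d * f 2) \<circ> (\<lambda>\<omega>. restrict (\<lambda>i. Xf i \<omega>) {2})) = (\<lambda>\<omega>. d * W2 \<omega>)"
      by (auto simp: Xf_def)
    finally show ?thesis .
  qed
  have DY: "distributed P lborel (\<lambda>\<omega>. c * X \<omega>) (\<lambda>y. ennreal (chi_density (2*M) (y / c) / c))"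
  proof -
    have "distributed P lborel (\<lambda>\<omega>. 0 + c * X \<omega>) (\<lambda>x. ennreal (chi_density (2 * M) ((x - 0) / c)) / \<bar>c\<bar>)"
      using c by (intro distributed_affine DX) simp
    moreover have "(\<lambda>x. ennreal (chi_density (2 * M) ((x - 0) / c)) / \<bar>c\<bar>) = (\<lambda>y. ennreal (chi_density (2*M) (y / c) / c))"
      using c by (auto simp: divide_ennreal chi_nonneg)
    ultimately show ?thesis by simp
  qed
  have DN1: "distributed P lborel (\<lambda>\<omega>. d * W1 \<omega>) (\<lambda>y. ennreal (normal_density 0 (sqrt l2 * sqrt (1/2)) y))"
    using normal_density_affine[OF DW1, of d 0] d by (simp add: d_def)
  have DN2: "distributed P lborel (\<lambda>\<omega>. d * W2 \<omega>) (\<lambda>y. ennreal (normal_density 0 (sqrt l2 * sqrt (1/2)) y))"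
    using normal_density_affine[OF DW2, of d 0] d by (simp add: d_def)
  have DR0: "distributed P lborel (\<lambda>\<omega>. d * W1 \<omega> + c * X \<omega>)
     (\<lambda>z. \<integral>\<^sup>+y. ennreal (normal_density 0 (sqrt l2 * sqrt (1/2)) (z - y)) * ennreal (chi_density (2*M) (y / c) / c) \<partial>lborel)"
    by (rule distributed_convolution[OF I1 DN1 DY])
  have conv: "(\<integral>\<^sup>+y. ennreal (normal_density 0 (sqrt l2 * sqrt (1/2)) (z - y)) * ennreal (chi_density (2*M) (y / c) / c) \<partial>lborel)
       = ennreal (f1 M l1 l2 z)" for z
  proof -
    define G where "G = (\<lambda>y. normal_density 0 (sqrt l2 * sqrt (1/2)) (z - y) * (chi_density (2*M) (y / sqrt (l1/2)) / sqrt (l1/2)))"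
    have Gnn: "G y \<ge> 0" for y unfolding G_def using l1 by (intro mult_nonneg_nonneg divide_nonneg_pos chi_nonneg) auto
    have "(\<integral>\<^sup>+y. ennreal (normal_density 0 (sqrt l2 * sqrt (1/2)) (z - y)) * ennreal (chi_density (2*M) (y / c) / c) \<partial>lborel)
        = (\<integral>\<^sup>+y. ennreal (G y) \<partial>lborel)"
      unfolding G_def c_def
      apply (intro nn_integral_cong)
      apply (subst ennreal_mult''[symmetric])
       apply (rule divide_nonneg_nonneg[OF chi_nonneg]) apply (simp add: less_imp_le[OF l1])
      apply simp
      done
    also have "\<dots> = ennreal (\<integral>y. G y \<partial>lborel)"
      using conv_real(1)[OF l1 l2 assms(2), of z] Gnn unfolding G_def
      by (intro nn_integral_eq_integral) auto
    also have "(\<integral>y. G y \<partial>lborel) = f1 M l1 l2 z"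
      unfolding G_def by (rule conv_real(2)[OF l1 l2 assms(2)])
    finally show ?thesis .
  qed
  have DR: "distributed P lborel (\<lambda>\<omega>. d * W1 \<omega> + c * X \<omega>) (\<lambda>z. ennreal (f1 M l1 l2 z))"
    using DR0 unfolding conv .
  have J: "distributed P (lborel \<Otimes>\<^sub>M lborel) (\<lambda>\<omega>. (d * W1 \<omega> + c * X \<omega>, d * W2 \<omega>))
      (\<lambda>(x, y). ennreal (f1 M l1 l2 x) * ennreal (normal_density 0 (sqrt l2 * sqrt (1/2)) y))"
  proof -
    have I2': "indep_var lborel (\<lambda>\<omega>. d * W1 \<omega> + c * X \<omega>) lborel (\<lambda>\<omega>. d * W2 \<omega>)"
      using I2 unfolding indep_var_eq by simp
    show ?thesis by (rule distributed_joint_indep[OF sigma_finite_lborel sigma_finite_lborel DR DN2 I2'])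
  qed
  have e1: "(\<lambda>\<omega>. (Re (complex_of_real (sqrt (l1 / 2) * X \<omega>) + complex_of_real (sqrt l2) * Complex (W1 \<omega>) (W2 \<omega>)),
                   Im (complex_of_real (sqrt (l1 / 2) * X \<omega>) + complex_of_real (sqrt l2) * Complex (W1 \<omega>) (W2 \<omega>))))
          = (\<lambda>\<omega>. (d * W1 \<omega> + c * X \<omega>, d * W2 \<omega>))"
    by (auto simp: c_def d_def fun_eq_iff)
  have e2: "(\<lambda>(a, b). ennreal (f1 M l1 l2 a * f2 l2 b))
      = (\<lambda>(x, y). ennreal (f1 M l1 l2 x) * ennreal (normal_density 0 (sqrt l2 * sqrt (1/2)) y))"
  proof -
    have "f2 l2 b = normal_density 0 (sqrt l2 * sqrt (1/2)) b" for b
      unfolding f2_def normal_eq[OF l2] by simp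
    moreover have "f2 l2 b \<ge> 0" for b unfolding f2_def using l2 by (intro divide_nonneg_nonneg) auto
    ultimately show ?thesis by (auto simp: fun_eq_iff ennreal_mult'')
  qed
  show "let l1 = lam1 rho q beta (real tp) sigma2 alpha;
         l2 = lam2 rho q beta (real tp) sigma2 Ups alpha;
         z = (\<lambda>\<omega>. complex_of_real (sqrt (l1 / 2) * X \<omega>)
                   + complex_of_real (sqrt l2) * Complex (W1 \<omega>) (W2 \<omega>))
     in distributed P (lborel \<Otimes>\<^sub>M lborel) (\<lambda>\<omega>. (Re (z \<omega>), Im (z \<omega>)))
          (\<lambda>(a, b). ennreal (f1 M l1 l2 a * f2 l2 b))"
    unfolding Let_def l1_def[symmetric] l2_def[symmetric] e1 e2 by (rule J)
qed


end
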